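(* Let $\beta=\log_2(3/2)$ and \[ g(x,y)=\bigl((2x(1-x))^{1/\beta}+(x-y)^{1/\beta}\bigr)^\beta-2(x+y^2)+(x+y)^2 . \] Then $g(x,y)\ge0$ for all $x,y\in[0,1]$ with $x(2x-1)\le y\le x$. *)

theory Defs
  imports Complex_Main
begin

definition beta :: real where "beta = log 2 (3/2)"

definition g :: "real \<Rightarrow> real \<Rightarrow> real" where
  "g x y = ((2*x*(1-x)) powr (1/beta) + (x-y) powr (1/beta)) powr beta
           - 2*(x + y^2) + (x+y)^2"

end

theory Submission
  imports Defs "HOL-Analysis.Analysis"
begin

lemma beta_bounds: "1/2 < beta" "beta < 1"
proof -
  have "log 2 (3/2::real) < 1"
    by (subst log_less_iff) auto
  thus "beta < 1" unfolding beta_def .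
  have sq: "(2 powr (1/2::real))^2 = 2" by (simp add: powr_powr flip: powr_realpow)
  have "2 powr (1/2::real) < 3/2"
  proof (rule ccontr)
    assume "\<not> 2 powr (1/2::real) < 3/2"
    hence "3/2 \<le> 2 powr (1/2::real)" by simp
    hence "(3/2)^2 \<le> (2 powr (1/2::real))^2" by (rule power_mono) simp
    thus False using sq by (simp add: power2_eq_square)
  qed
  hence "1/2 < log 2 (3/2::real)"
    by (subst less_log_iff) auto
  thus "1/2 < beta" unfolding beta_def .
qed

lemma three_halves_p: "(3/2::real) powr (1/beta) = 2"
proof -
  have h: "(2::real) powr beta = 3/2" unfolding beta_def by simp
  have "(3/2::real) powr (1/beta) = (2 powr beta) powr (1/beta)" by (simp only: h)
  also have "\<dots> = 2" using beta_bounds by (simp add: powr_powr)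
  finally show ?thesis .
qed

lemma convex_step:
  fixes s :: real assumes "0 \<le> s" "s \<le> 1"
  shows "(1 + s/2) powr (1/beta) \<le> 1 + s"
proof -
  have p1: "1 \<le> 1/beta" using beta_bounds by simp
  have "(\<lambda>x. x powr (1/beta)) ((1 - s) *\<^sub>R 1 + s *\<^sub>R (3/2))
      \<le> (1 - s) * (\<lambda>x. x powr (1/beta)) 1 + s * (\<lambda>x. x powr (1/beta)) (3/2)"
    by (rule convex_onD[OF powr_convex[OF p1]]) (use assms in auto)
  thus ?thesis using three_halves_p by (simp add: algebra_simps)
qed


theorem proposition2p3:
  fixes x y :: real
  assumes "0 \<le> x" "x \<le> 1" "0 \<le> y" "y \<le> 1"
    and "x*(2*x-1) \<le> y" "y \<le> x"
  shows "g x y \<ge> 0"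
proof -
  define p where "p = 1/beta"
  define a where "a = 2*x*(1-x)"
  define b where "b = x - y"
  have bp: "1/2 < beta" "beta < 1" by (rule beta_bounds)+
  have p12: "1 < p" "p < 2" using bp unfolding p_def by (auto simp: field_simps)
  have pb: "p * beta = 1" using bp unfolding p_def by simp
  have b0: "0 \<le> b" using assms unfolding b_def by simp
  have ba: "b \<le> a" using assms unfolding a_def b_def by (simp add: algebra_simps)
  have ah: "a \<le> 1/2"
  proof -
    have "0 \<le> (2*x-1)^2" by simp
    thus ?thesis unfolding a_def by (simp add: power2_eq_square algebra_simps)
  qed
  have geq: "g x y = (a powr p + b powr p) powr beta - (a + b^2)"
    unfolding g_def a_def b_def p_def by (simp add: power2_eq_square algebra_simps)
  show ?thesis
  proof (cases "b = 0")
    case True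
    have "(a powr p) powr beta = a" using pb b0 ba True
      by (cases "a = 0") (auto simp: powr_powr)
    thus ?thesis using True geq p12 by simp
  next
    case False
    hence bpos: "0 < b" using b0 by simp
    hence apos: "0 < a" using ba by simp
    define s where "s = (b/a) powr p"
    have s0: "0 \<le> s" unfolding s_def by simp
    have s1: "s \<le> 1"
    proof -
      have "b/a \<le> 1" using apos ba by simp
      hence "(b/a) powr p \<le> 1 powr p" using bpos apos p12
        by (intro powr_mono2) auto
      thus ?thesis unfolding s_def by simp
    qed
    have key: "2 * b^2 * a powr (p-1) \<le> b powr p"
    proof -
      have "a powr (p-2) \<le> b powr (p-2)" using p12 bpos ba by (intro powr_mono2') auto
      hence "b^2 * a powr (p-2) \<le> b^2 * b powr (p-2)" by (simp add: mult_left_mono)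
      also have "b^2 * b powr (p-2) = b powr p"
      proof -
        have "b^2 = b powr 2" using bpos by (simp add: powr_realpow)
        hence "b^2 * b powr (p-2) = b powr (2 + (p-2))" by (simp only: powr_add)
        thus ?thesis by simp
      qed
      finally have h: "b^2 * a powr (p-2) \<le> b powr p" .
      have "a powr (p-1) = a powr (1 + (p-2))" by simp
      also have "\<dots> = a * a powr (p-2)" using apos by (simp only: powr_add powr_one_gt_zero_iff) simp
      finally have "a powr (p-1) = a * a powr (p-2)" .
      hence "2 * b^2 * a powr (p-1) = (2*a) * (b^2 * a powr (p-2))" by simp
      also have "\<dots> \<le> 1 * (b^2 * a powr (p-2))" using ah
        by (intro mult_right_mono) auto
      finally show ?thesis using h by simp
    qed
    define A where "A = a powr p"
    define B where "B = b powr p"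
    define a' where "a' = a powr (p-1)"
    have Apos: "0 < A" unfolding A_def using apos by simp
    have a'pos: "0 < a'" unfolding a'_def using apos by simp
    have sAB: "s = B / A" unfolding s_def A_def B_def using bpos apos by (simp add: powr_divide)
    have Aa: "A = a * a'"
    proof -
      have "a powr p = a powr (1 + (p-1))" by simp
      also have "\<dots> = a * a powr (p-1)" using apos by (simp only: powr_add) simp
      finally show ?thesis unfolding A_def a'_def .
    qed
    have key': "2 * b^2 * a' \<le> B" using key unfolding a'_def B_def .
    have bb: "b^2/a \<le> s/2"
    proof -
      have "b^2/a = (2 * b^2 * a') / (2*A)" using Aa apos a'pos by (simp add: field_simps)
      also have "\<dots> \<le> B / (2*A)" using key' Apos by (intro divide_right_mono) auto
      also have "\<dots> = s/2" using sAB by simp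
      finally show ?thesis .
    qed
    define c where "c = a + b^2"
    have cpos: "0 < c" unfolding c_def using apos by (simp add: add_pos_nonneg)
    have "c / a = 1 + b^2/a" unfolding c_def using apos by (simp add: add_divide_distrib)
    hence "c / a \<le> 1 + s/2" using bb by simp
    hence "(c/a) powr p \<le> (1 + s/2) powr p" using cpos apos p12 by (intro powr_mono2) auto
    also have "\<dots> \<le> 1 + s" unfolding p_def by (rule convex_step[OF s0 s1])
    finally have "(c/a) powr p \<le> 1 + s" .
    moreover have "(c/a) powr p = c powr p / A" unfolding A_def using cpos apos by (simp add: powr_divide)
    ultimately have "c powr p / A \<le> 1 + s" by simp
    hence "c powr p \<le> (1 + s) * A" using Apos by (simp add: pos_divide_le_eq)
    also have "(1 + s) * A = A + B" using sAB Apos by (simp add: distrib_right)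
    finally have "c powr p \<le> a powr p + b powr p" unfolding A_def B_def .
    hence "(c powr p) powr beta \<le> (a powr p + b powr p) powr beta" using bp
      by (intro powr_mono2) auto
    moreover have "(c powr p) powr beta = c" using pb cpos by (simp add: powr_powr)
    ultimately have "c \<le> (a powr p + b powr p) powr beta" by simp
    thus ?thesis using geq unfolding c_def by simp
  qed
qed

end
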